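(* There exists $\rho>0$ such that, for every tiling $T\in\Omega$: (i) for every decorated face $f=(p,q)$ of $T$ (of any dimension), $\cap p + B(0,\rho)\subset \cup q$; (ii) for any two decorated faces $f=(p,q)$ and $f'=(p',q')$ of $T$, if $\operatorname{dist}(\cap p,\cap p')<\rho$ then $f$ and $f'$ intersect.
   Context: Setting. A tile is a compact subset of $\mathbb{R}^d$ homeomorphic to a closed ball which is a finite CW-complex (tiles may carry labels). A partial tiling is a set of tiles with pairwise disjoint interiors, a patch is a finite partial tiling, a tiling is a partial tiling covering $\mathbb{R}^d$; in any partial tiling the intersection of any collection of tiles is empty or a subcomplex of each of them. $\Omega$ denotes the tiling space of a primitive, strongly aperiodic substitution with finite local complexity (finitely many patches of each given size up to translation) on a finite prototile set. For a patch $p$ write $\cap p$ for the intersection of its tiles and $\cup p$ for the union of its tiles; $B(0,\rho)$ is the open ball of radius $\rho$. Faces. Let $T\in\Omega$. A $j$-dimensional (decorated) face of $T$ is a pair $f=(p,q)$ of patches of $T$ such that: $\cap p$ is a $j$-dimensional closed CW-complex; $p$ is maximal, i.e. no tile $t'\in T$ outside $p$ contains $\cap p$; and $q$ is the set of all tiles of $T$ which intersect $\cap p$. Two faces $f=(p,q)$, $f'=(p',q')$ intersect if $p\subset q'$, $p'\subset q$, and $q\cup q'$ is a well-defined patch (the collars match). *)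

theory Defs
  imports "HOL-Analysis.Analysis"
begin

text \<open>A cell is a pair (S, phi): S is a linear subspace (its dimension is the
dimension of the cell), the closed n-ball is cball 0 1 inter S, and phi is the
characteristic map.\<close>

type_synonym 'a cell = "'a set \<times> ('a \<Rightarrow> 'a)"

definition closed_cell :: "'a::euclidean_space cell \<Rightarrow> 'a set" where
  "closed_cell c = snd c ` (cball 0 1 \<inter> fst c)"

definition open_cell :: "'a::euclidean_space cell \<Rightarrow> 'a set" where
  "open_cell c = snd c ` (ball 0 1 \<inter> fst c)"

definition cell_dim :: "'a::euclidean_space cell \<Rightarrow> nat" where
  "cell_dim c = dim (fst c)"

definition is_cw_complex :: "'a::euclidean_space set \<Rightarrow> 'a cell set \<Rightarrow> bool" where
  "is_cw_complex X C \<longleftrightarrow>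
     finite C \<and>
     (\<forall>c\<in>C. subspace (fst c) \<and>
        continuous_on (cball 0 1 \<inter> fst c) (snd c) \<and>
        (\<exists>g. homeomorphism (ball 0 1 \<inter> fst c) (open_cell c) (snd c) g) \<and>
        snd c ` (sphere 0 1 \<inter> fst c) \<subseteq>
           \<Union>(open_cell ` {c'\<in>C. cell_dim c' < cell_dim c})) \<and>
     (\<forall>c\<in>C. \<forall>c'\<in>C. c \<noteq> c' \<longrightarrow> open_cell c \<inter> open_cell c' = {}) \<and>
     X = \<Union>(open_cell ` C)"

record ('a, 'l) tile =
  supp :: "'a set"
  lab :: 'l
  cells :: "('a set \<times> ('a \<Rightarrow> 'a)) set"

definition is_tile :: "('a::euclidean_space, 'l) tile \<Rightarrow> bool" where
  "is_tile t \<longleftrightarrow> compact (supp t) \<and> supp t homeomorphic (cball (0::'a) 1) \<and>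
     is_cw_complex (supp t) (cells t)"

definition is_subcomplex :: "('a::euclidean_space, 'l) tile \<Rightarrow> 'a set \<Rightarrow> bool" where
  "is_subcomplex t Y \<longleftrightarrow> (\<exists>C'\<subseteq>cells t. Y = \<Union>(open_cell ` C') \<and> (\<forall>c\<in>C'. closed_cell c \<subseteq> Y))"

definition is_subcomplex_dim :: "('a::euclidean_space, 'l) tile \<Rightarrow> 'a set \<Rightarrow> nat \<Rightarrow> bool" where
  "is_subcomplex_dim t Y j \<longleftrightarrow> (\<exists>C'\<subseteq>cells t. C' \<noteq> {} \<and> Y = \<Union>(open_cell ` C') \<and>
      (\<forall>c\<in>C'. closed_cell c \<subseteq> Y) \<and> j = Max (cell_dim ` C'))"

definition translate_tile :: "'a::euclidean_space \<Rightarrow> ('a, 'l) tile \<Rightarrow> ('a, 'l) tile" where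
  "translate_tile x t = \<lparr> supp = (\<lambda>y. y + x) ` supp t, lab = lab t,
      cells = (\<lambda>(S, \<phi>). (S, \<lambda>y. \<phi> y + x)) ` cells t \<rparr>"

definition translate_patch :: "'a::euclidean_space \<Rightarrow> ('a, 'l) tile set \<Rightarrow> ('a, 'l) tile set" where
  "translate_patch x Q = translate_tile x ` Q"

text \<open>Partial tiling, including the standing assumption that the intersection of
any collection of tiles is empty or a subcomplex of each of them.\<close>
definition partial_tiling :: "('a::euclidean_space, 'l) tile set \<Rightarrow> bool" where
  "partial_tiling T \<longleftrightarrow> (\<forall>t\<in>T. is_tile t) \<and>
     (\<forall>t\<in>T. \<forall>t'\<in>T. t \<noteq> t' \<longrightarrow> interior (supp t) \<inter> interior (supp t') = {}) \<and>
     (\<forall>P\<subseteq>T. P \<noteq> {} \<longrightarrow> \<Inter>(supp ` P) = {} \<or> (\<forall>t\<in>P. is_subcomplex t (\<Inter>(supp ` P))))"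

definition is_patch :: "('a::euclidean_space, 'l) tile set \<Rightarrow> bool" where
  "is_patch Q \<longleftrightarrow> finite Q \<and> partial_tiling Q"

definition is_tiling :: "('a::euclidean_space, 'l) tile set \<Rightarrow> bool" where
  "is_tiling T \<longleftrightarrow> partial_tiling T \<and> \<Union>(supp ` T) = UNIV"

text \<open>Expanding: some power of L strictly expands norms uniformly
(equivalent to all eigenvalues having modulus > 1).\<close>
definition is_substitution ::
  "('a::euclidean_space, 'l) tile set \<Rightarrow> ('a \<Rightarrow> 'a) \<Rightarrow> (('a, 'l) tile \<Rightarrow> ('a, 'l) tile set) \<Rightarrow> bool" where
  "is_substitution P L \<sigma> \<longleftrightarrow> finite P \<and> P \<noteq> {} \<and> (\<forall>s\<in>P. is_tile s) \<and>
     linear L \<and> (\<exists>k>0. \<exists>c>1. \<forall>x. norm ((L ^^ k) x) \<ge> c * norm x) \<and>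
     (\<forall>s\<in>P. is_patch (\<sigma> s) \<and> (\<forall>u\<in>\<sigma> s. \<exists>s'\<in>P. \<exists>x. u = translate_tile x s') \<and>
        \<Union>(supp ` \<sigma> s) = L ` supp s) \<and>
     (\<forall>s\<in>P. \<forall>x. \<sigma> (translate_tile x s) = translate_patch (L x) (\<sigma> s))"

definition subst_iter :: "(('a, 'l) tile \<Rightarrow> ('a, 'l) tile set) \<Rightarrow> nat \<Rightarrow> ('a, 'l) tile set \<Rightarrow> ('a, 'l) tile set" where
  "subst_iter \<sigma> n Q = ((\<lambda>Q. \<Union>(\<sigma> ` Q)) ^^ n) Q"

definition tiling_space ::
  "('a::euclidean_space, 'l) tile set \<Rightarrow> (('a, 'l) tile \<Rightarrow> ('a, 'l) tile set) \<Rightarrow> ('a, 'l) tile set set" where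
  "tiling_space P \<sigma> = {T. is_tiling T \<and> (\<forall>t\<in>T. \<exists>s\<in>P. \<exists>x. t = translate_tile x s) \<and>
     (\<forall>Q\<subseteq>T. finite Q \<longrightarrow> (\<exists>n s x. s \<in> P \<and> translate_patch x Q \<subseteq> subst_iter \<sigma> n {s}))}"

definition primitive_subst ::
  "('a::euclidean_space, 'l) tile set \<Rightarrow> (('a, 'l) tile \<Rightarrow> ('a, 'l) tile set) \<Rightarrow> bool" where
  "primitive_subst P \<sigma> \<longleftrightarrow> (\<exists>n>0. \<forall>s\<in>P. \<forall>t\<in>P. \<exists>x. translate_tile x t \<in> subst_iter \<sigma> n {s})"

definition strongly_aperiodic :: "('a::euclidean_space, 'l) tile set set \<Rightarrow> bool" where
  "strongly_aperiodic \<Omega> \<longleftrightarrow> (\<forall>T\<in>\<Omega>. \<forall>x. translate_patch x T = T \<longrightarrow> x = 0)"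

definition FLC :: "('a::euclidean_space, 'l) tile set set \<Rightarrow> bool" where
  "FLC \<Omega> \<longleftrightarrow> (\<forall>R>0. \<exists>F. finite F \<and> (\<forall>T\<in>\<Omega>. \<forall>Q\<subseteq>T.
      finite Q \<and> (\<exists>x. \<Union>(supp ` Q) \<subseteq> cball x R) \<longrightarrow> (\<exists>Q0\<in>F. \<exists>y. Q = translate_patch y Q0)))"

definition is_face :: "('a::euclidean_space, 'l) tile set \<Rightarrow> nat \<Rightarrow> ('a, 'l) tile set \<Rightarrow> ('a, 'l) tile set \<Rightarrow> bool" where
  "is_face T j p q \<longleftrightarrow> is_patch p \<and> p \<subseteq> T \<and> is_patch q \<and> q \<subseteq> T \<and> p \<noteq> {} \<and>
     (\<forall>t\<in>p. is_subcomplex_dim t (\<Inter>(supp ` p)) j) \<and>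
     (\<forall>t\<in>T. \<Inter>(supp ` p) \<subseteq> supp t \<longrightarrow> t \<in> p) \<and>
     q = {t\<in>T. supp t \<inter> \<Inter>(supp ` p) \<noteq> {}}"

definition faces_intersect :: "('a::euclidean_space, 'l) tile set \<Rightarrow> ('a, 'l) tile set \<Rightarrow> ('a, 'l) tile set \<Rightarrow> ('a, 'l) tile set \<Rightarrow> bool" where
  "faces_intersect p q p' q' \<longleftrightarrow> p \<subseteq> q' \<and> p' \<subseteq> q \<and> is_patch (q \<union> q')"

end

theory Submission
  imports Defs
begin

lemma setdist_transl_le:
  fixes S T :: "'a::real_normed_vector set"
  shows "setdist S T \<le> setdist ((\<lambda>z. z + y) ` S) ((\<lambda>z. z + y) ` T)"
proof (cases "S = {} \<or> T = {}")
  case True then show ?thesis by auto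
next
  case False
  show ?thesis
  proof (rule le_setdistI)
    fix a b assume "a \<in> (\<lambda>z. z + y) ` S" "b \<in> (\<lambda>z. z + y) ` T"
    then obtain a0 b0 where "a0 \<in> S" "b0 \<in> T" "a = a0 + y" "b = b0 + y" by auto
    then show "setdist S T \<le> dist a b"
      using setdist_le_dist[of a0 S b0 T] by (simp add: dist_norm)
  qed (use False in auto)
qed

lemma setdist_transl:
  fixes S T :: "'a::real_normed_vector set"
  shows "setdist ((\<lambda>z. z + y) ` S) ((\<lambda>z. z + y) ` T) = setdist S T"
proof -
  have "setdist ((\<lambda>z. z + y) ` S) ((\<lambda>z. z + y) ` T) \<le>
     setdist ((\<lambda>z. z + - y) ` (\<lambda>z. z + y) ` S) ((\<lambda>z. z + - y) ` (\<lambda>z. z + y) ` T)"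
    by (rule setdist_transl_le)
  also have "\<dots> = setdist S T" by (simp add: image_image)
  finally show ?thesis using setdist_transl_le[of S T y] by linarith
qed

lemma translate_tile_inv:
  "translate_tile (- y) (translate_tile y t) = (t :: ('a::euclidean_space, 'l) tile)"
proof -
  have c: "(\<lambda>(S, \<phi>). (S, \<lambda>z. \<phi> z + - y)) ` (\<lambda>(S, \<phi>). (S, \<lambda>z. \<phi> z + y)) ` cells t = cells t"
    by (force simp: image_image split_def)
  show ?thesis unfolding translate_tile_def using c by (simp add: image_image)
qed

lemma translate_tile_inj: "inj (translate_tile (y::'a::euclidean_space) :: ('a,'l) tile \<Rightarrow> _)"
  by (metis injI translate_tile_inv)

lemma supp_translate: "supp (translate_tile y t) = (\<lambda>z. z + y) ` supp t"
  by (simp add: translate_tile_def)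

lemma partial_tiling_subset: "partial_tiling T \<Longrightarrow> Q \<subseteq> T \<Longrightarrow> partial_tiling Q"
  unfolding partial_tiling_def by (simp add: subset_iff)

lemma Inter_translate:
  assumes "A0 \<noteq> {}"
  shows "\<Inter>(supp ` (translate_tile y ` A0)) = (\<lambda>z. z + y) ` \<Inter>(supp ` A0)"
proof -
  obtain j where "j \<in> A0" using assms by auto
  have "(\<lambda>z. z + y) ` \<Inter>(supp ` A0) = (\<Inter>x\<in>A0. (\<lambda>z. z + y) ` supp x)"
    by (rule image_INT[where C=UNIV and j=j]) (auto simp: inj_on_def \<open>j \<in> A0\<close>)
  then show ?thesis by (simp add: supp_translate image_image)
qed


lemma bound_D:
  assumes "finite P" "\<forall>s\<in>P. is_tile s"
  obtains D :: real where "D \<ge> 0" "\<forall>s\<in>P. \<forall>z\<in>supp s. norm (z::'a::euclidean_space) \<le> D"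
proof -
  have "bounded (\<Union>(supp ` P))"
    using assms by (auto intro!: bounded_Union compact_imp_bounded simp: is_tile_def)
  then obtain a where "\<forall>x\<in>\<Union>(supp ` P). norm x \<le> a" by (auto simp: bounded_iff)
  then show ?thesis using that[of "max a 0"] by force
qed

lemma tile_diam:
  assumes T: "T \<in> tiling_space P \<sigma>" and t: "t \<in> T"
    and D: "\<forall>s\<in>P. \<forall>z\<in>supp s. norm (z::'a::euclidean_space) \<le> D"
    and u: "u \<in> supp t" and v: "v \<in> supp t"
  shows "dist u v \<le> 2 * D"
proof -
  obtain s x where s: "s \<in> P" "t = translate_tile x s"
    using T t unfolding tiling_space_def by blast
  then obtain u0 v0 where "u0 \<in> supp s" "v0 \<in> supp s" "u = u0 + x" "v = v0 + x"
    using u v by (auto simp: supp_translate)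
  then have "dist u v = norm (u0 - v0)" by (simp add: dist_norm)
  also have "\<dots> \<le> norm u0 + norm v0" by (rule norm_triangle_ineq4)
  also have "\<dots> \<le> 2 * D"
  proof -
    have "norm u0 \<le> D" "norm v0 \<le> D" using D s(1) \<open>u0 \<in> supp s\<close> \<open>v0 \<in> supp s\<close> by auto
    then show ?thesis by linarith
  qed
  finally show ?thesis .
qed

lemma tile_compact:
  assumes "T \<in> tiling_space P \<sigma>" "t \<in> T" shows "compact (supp t)"
  using assms by (auto simp: tiling_space_def is_tiling_def partial_tiling_def is_tile_def)

lemma key_claim:
  fixes P :: "('a::euclidean_space, 'l) tile set"
  assumes sub: "is_substitution P L \<sigma>" and flc: "FLC (tiling_space P \<sigma>)"
  shows "\<exists>\<rho>>0. \<rho> \<le> 1 \<and> (\<forall>T\<in>tiling_space P \<sigma>. \<forall>A B. A \<subseteq> T \<and> B \<subseteq> T \<and> finite A \<and> finite B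
     \<and> A \<noteq> {} \<and> B \<noteq> {} \<and> \<Inter>(supp ` A) \<noteq> {} \<and> \<Inter>(supp ` B) \<noteq> {} \<and>
     \<Inter>(supp ` A) \<inter> \<Inter>(supp ` B) = {} \<longrightarrow> \<rho> \<le> setdist (\<Inter>(supp ` A)) (\<Inter>(supp ` B)))"
proof -
  have fP: "finite P" using sub unfolding is_substitution_def by (elim conjE) assumption
  have tP: "\<forall>s\<in>P. is_tile s" using sub unfolding is_substitution_def by (elim conjE) assumption
  obtain D where D0: "D \<ge> 0" and D: "\<forall>s\<in>P. \<forall>z\<in>supp s. norm (z::'a) \<le> D"
    by (rule bound_D[OF fP tP])
  define R where "R = 2 * D + 1"
  have "R > 0" using D0 by (simp add: R_def)
  then obtain F where finF: "finite F" and F: "\<forall>T\<in>tiling_space P \<sigma>. \<forall>Q\<subseteq>T.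
      finite Q \<and> (\<exists>x. \<Union>(supp ` Q) \<subseteq> cball x R) \<longrightarrow> (\<exists>Q0\<in>F. \<exists>y. Q = translate_patch y Q0)"
    using flc unfolding FLC_def by (elim allE[of _ R]) auto
  define F' where "F' = {Q0\<in>F. finite Q0}"
  define S where "S = (\<lambda>(A0, B0). setdist (\<Inter>(supp ` A0)) (\<Inter>(supp ` B0))) ` (\<Union>Q0\<in>F'. Pow Q0 \<times> Pow Q0)"
  have "finite F'" using finF by (simp add: F'_def)
  have "finite S" unfolding S_def
    by (intro finite_imageI finite_UN_I \<open>finite F'\<close> finite_cartesian_product finite_Pow_iff[THEN iffD2])
       (simp_all add: F'_def)
  define \<rho> where "\<rho> = Min (insert 1 {s\<in>S. s > 0})"
  have fin1: "finite (insert 1 {s\<in>S. s > 0})" using \<open>finite S\<close> by auto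
  have "\<rho> > 0" unfolding \<rho>_def using fin1 by (subst Min_gr_iff) auto
  moreover have "\<rho> \<le> 1" unfolding \<rho>_def using fin1 by (intro Min_le) auto
  moreover have main: "\<rho> \<le> setdist (\<Inter>(supp ` A)) (\<Inter>(supp ` B))"
    if T: "T \<in> tiling_space P \<sigma>" and AB: "A \<subseteq> T" "B \<subseteq> T" "finite A" "finite B" "A \<noteq> {}" "B \<noteq> {}"
      and ne: "\<Inter>(supp ` A) \<noteq> {}" "\<Inter>(supp ` B) \<noteq> {}"
      and dj: "\<Inter>(supp ` A) \<inter> \<Inter>(supp ` B) = {}" for T A B
  proof (cases "setdist (\<Inter>(supp ` A)) (\<Inter>(supp ` B)) < 1")
    case False then show ?thesis using \<open>\<rho> \<le> 1\<close> by linarith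
  next
    case True
    obtain a b where a: "a \<in> \<Inter>(supp ` A)" and b: "b \<in> \<Inter>(supp ` B)" and ab: "dist a b < 1"
      by (rule setdist_ltE[OF True ne])
    have "\<Union>(supp ` (A \<union> B)) \<subseteq> cball a R"
    proof
      fix z assume "z \<in> \<Union>(supp ` (A \<union> B))"
      then obtain t where t: "t \<in> A \<union> B" "z \<in> supp t" by auto
      show "z \<in> cball a R"
      proof (cases "t \<in> A")
        case True
        then have "a \<in> supp t" using a by auto
        have "t \<in> T" using True AB by auto
        then have "dist a z \<le> 2 * D" using tile_diam[OF T _ D \<open>a \<in> supp t\<close> t(2)] by simp
        then show ?thesis by (simp add: R_def)
      next
        case False
        then have "t \<in> B" using t by auto
        then have "b \<in> supp t" using b by auto
        have "t \<in> T" using \<open>t \<in> B\<close> AB by auto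
        then have "dist b z \<le> 2 * D" using tile_diam[OF T _ D \<open>b \<in> supp t\<close> t(2)] by simp
        then have "dist a z \<le> 2 * D + 1" using ab dist_triangle[of a z b] by linarith
        then show ?thesis by (simp add: R_def)
      qed
    qed
    then obtain Q0 y where Q0: "Q0 \<in> F" and eq: "A \<union> B = translate_patch y Q0"
    proof -
      have "A \<union> B \<subseteq> T" "finite (A \<union> B)" using AB by auto
      then have "\<exists>Q0\<in>F. \<exists>y. A \<union> B = translate_patch y Q0"
        using F[rule_format, OF T, of "A \<union> B"] \<open>\<Union>(supp ` (A \<union> B)) \<subseteq> cball a R\<close> by blast
      then show ?thesis using that by blast
    qed
    have "translate_tile y ` Q0 = A \<union> B" using eq by (simp add: translate_patch_def)
    then have "finite (translate_tile y ` Q0)" using AB by simp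
    then have "finite Q0" using translate_tile_inj[of y] by (metis finite_imageD inj_on_subset subset_UNIV)
    define A0 where "A0 = {t\<in>Q0. translate_tile y t \<in> A}"
    define B0 where "B0 = {t\<in>Q0. translate_tile y t \<in> B}"
    have A: "A = translate_tile y ` A0" using eq unfolding A0_def translate_patch_def by auto
    have B: "B = translate_tile y ` B0" using eq unfolding B0_def translate_patch_def by auto
    have "A0 \<noteq> {}" "B0 \<noteq> {}" using A B AB by auto
    have val: "setdist (\<Inter>(supp ` A)) (\<Inter>(supp ` B)) = setdist (\<Inter>(supp ` A0)) (\<Inter>(supp ` B0))"
      unfolding A B Inter_translate[OF \<open>A0 \<noteq> {}\<close>] Inter_translate[OF \<open>B0 \<noteq> {}\<close>] setdist_transl ..
    have inS: "setdist (\<Inter>(supp ` A)) (\<Inter>(supp ` B)) \<in> S"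
      unfolding val S_def F'_def using Q0 \<open>finite Q0\<close>
      by (intro image_eqI[where x="(A0, B0)"]) (auto simp: A0_def B0_def)
    have cA: "compact (\<Inter>(supp ` A))" using AB T by (intro compact_Inter) (auto intro: tile_compact)
    have cB: "compact (\<Inter>(supp ` B))" using AB T by (intro compact_Inter) (auto intro: tile_compact)
    have pos: "setdist (\<Inter>(supp ` A)) (\<Inter>(supp ` B)) > 0"
      using setdist_gt_0_compact_closed[OF cA compact_imp_closed[OF cB]] ne dj by auto
    show ?thesis unfolding \<rho>_def using fin1 inS pos by (intro Min_le) auto
  qed
  ultimately show ?thesis
    apply (intro exI[of _ \<rho>] conjI ballI allI impI)
      apply assumption
     apply assumption
    apply (elim conjE)
    apply (rule main)
              apply assumption+
    done
qed


lemma ts_tiling: "T \<in> tiling_space P \<sigma> \<Longrightarrow> is_tiling T"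
  unfolding tiling_space_def mem_Collect_eq by (elim conjE)

lemma ts_partial: "T \<in> tiling_space P \<sigma> \<Longrightarrow> partial_tiling T"
  by (drule ts_tiling) (simp add: is_tiling_def)

lemma ts_cover: "T \<in> tiling_space P \<sigma> \<Longrightarrow> \<Union>(supp ` T) = UNIV"
  by (drule ts_tiling) (simp add: is_tiling_def)

lemma ts_tile: "T \<in> tiling_space P \<sigma> \<Longrightarrow> t \<in> T \<Longrightarrow> is_tile t"
proof -
  assume a: "T \<in> tiling_space P \<sigma>" "t \<in> T"
  have "partial_tiling T" by (rule ts_partial[OF a(1)])
  then have "\<forall>t\<in>T. is_tile t" unfolding partial_tiling_def by (elim conjE)
  then show ?thesis using \<open>t \<in> T\<close> by blast
qed

lemma cw_subspace: "is_cw_complex X C \<Longrightarrow> c \<in> C \<Longrightarrow> subspace (fst c)"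
  unfolding is_cw_complex_def
  apply (elim conjE)
  apply (drule (1) bspec)
  apply (elim conjE)
  apply assumption
  done

lemma face_Inter_ne:
  assumes T: "T \<in> tiling_space P \<sigma>" and f: "is_face T j p q"
  shows "\<Inter>(supp ` p) \<noteq> {}"
proof -
  from f obtain t where t: "t \<in> p" "t \<in> T" unfolding is_face_def by blast
  have "is_tile t" by (rule ts_tile[OF T t(2)])
  then have cw: "is_cw_complex (supp t) (cells t)" unfolding is_tile_def by blast
  from f t have "is_subcomplex_dim t (\<Inter>(supp ` p)) j" unfolding is_face_def by blast
  then obtain C' where C': "C' \<subseteq> cells t" "C' \<noteq> {}" "\<Inter>(supp ` p) = \<Union>(open_cell ` C')"
    unfolding is_subcomplex_dim_def by blast
  then obtain c where c: "c \<in> C'" by blast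
  then have "subspace (fst c)" using cw C' by (intro cw_subspace[OF cw]) blast
  then have "snd c 0 \<in> open_cell c" unfolding open_cell_def using subspace_0 by fastforce
  then show ?thesis using C' c by blast
qed

lemma face_props:
  assumes "is_face T j p q"
  shows "p \<subseteq> T" "finite p" "p \<noteq> {}" "q = {t\<in>T. supp t \<inter> \<Inter>(supp ` p) \<noteq> {}}" "finite q" "q \<subseteq> T"
proof -
  have h: "is_patch p" "p \<subseteq> T" "is_patch q" "q \<subseteq> T" "p \<noteq> {}" "q = {t\<in>T. supp t \<inter> \<Inter>(supp ` p) \<noteq> {}}"
    using assms unfolding is_face_def by blast+
  then show "p \<subseteq> T" "finite p" "p \<noteq> {}" "q = {t\<in>T. supp t \<inter> \<Inter>(supp ` p) \<noteq> {}}" "finite q" "q \<subseteq> T"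
    by (simp_all add: is_patch_def)
qed

theorem lemma2p25:
  fixes P :: "('a::euclidean_space, 'l) tile set"
    and L :: "'a \<Rightarrow> 'a"
    and \<sigma> :: "('a, 'l) tile \<Rightarrow> ('a, 'l) tile set"
  assumes "is_substitution P L \<sigma>"
    and "primitive_subst P \<sigma>"
    and "strongly_aperiodic (tiling_space P \<sigma>)"
    and "FLC (tiling_space P \<sigma>)"
  shows "\<exists>\<rho>>0. \<forall>T\<in>tiling_space P \<sigma>.
     (\<forall>j p q. is_face T j p q \<longrightarrow>
        {x + y | x y. x \<in> \<Inter>(supp ` p) \<and> y \<in> ball 0 \<rho>} \<subseteq> \<Union>(supp ` q)) \<and>
     (\<forall>j p q j' p' q'. is_face T j p q \<and> is_face T j' p' q' \<and>
        setdist (\<Inter>(supp ` p)) (\<Inter>(supp ` p')) < \<rho> \<longrightarrow> faces_intersect p q p' q')"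
proof -
  from key_claim[OF assms(1) assms(4)] obtain \<rho> where \<rho>all: "\<rho> > 0 \<and> \<rho> \<le> 1 \<and> (\<forall>T\<in>tiling_space P \<sigma>. \<forall>A B. A \<subseteq> T \<and> B \<subseteq> T \<and> finite A \<and> finite B
     \<and> A \<noteq> {} \<and> B \<noteq> {} \<and> \<Inter>(supp ` A) \<noteq> {} \<and> \<Inter>(supp ` B) \<noteq> {} \<and>
     \<Inter>(supp ` A) \<inter> \<Inter>(supp ` B) = {} \<longrightarrow> \<rho> \<le> setdist (\<Inter>(supp ` A)) (\<Inter>(supp ` B)))" ..
  have \<rho>0: "\<rho> > 0" using \<rho>all by (rule conjunct1)
  have key: "\<forall>T\<in>tiling_space P \<sigma>. \<forall>A B. A \<subseteq> T \<and> B \<subseteq> T \<and> finite A \<and> finite B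
     \<and> A \<noteq> {} \<and> B \<noteq> {} \<and> \<Inter>(supp ` A) \<noteq> {} \<and> \<Inter>(supp ` B) \<noteq> {} \<and>
     \<Inter>(supp ` A) \<inter> \<Inter>(supp ` B) = {} \<longrightarrow> \<rho> \<le> setdist (\<Inter>(supp ` A)) (\<Inter>(supp ` B))"
    using \<rho>all by (rule conjunct2[THEN conjunct2])
  have part1: "{x + y | x y. x \<in> \<Inter>(supp ` p) \<and> y \<in> ball 0 \<rho>} \<subseteq> \<Union>(supp ` q)"
    if T: "T \<in> tiling_space P \<sigma>" and f: "is_face T j p q" for T j p q
  proof
    fix w assume "w \<in> {x + y | x y. x \<in> \<Inter>(supp ` p) \<and> y \<in> ball 0 \<rho>}"
    then obtain x y where x: "x \<in> \<Inter>(supp ` p)" and y: "y \<in> ball 0 \<rho>" and w: "w = x + y" by blast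
    have "\<Union>(supp ` T) = UNIV" using T by (rule ts_cover)
    then obtain t where t: "t \<in> T" "w \<in> supp t" by blast
    note fp = face_props[OF f]
    show "w \<in> \<Union>(supp ` q)"
    proof (cases "supp t \<inter> \<Inter>(supp ` p) = {}")
      case False
      then have "t \<in> q" using fp(4) t by blast
      then show ?thesis using t by blast
    next
      case True
      have ne: "\<Inter>(supp ` p) \<noteq> {}" by (rule face_Inter_ne[OF T f])
      have "\<rho> \<le> setdist (\<Inter>(supp ` {t})) (\<Inter>(supp ` p))"
        using key[rule_format, OF T, of "{t}" p] t fp ne True by auto
      also have "\<dots> \<le> dist w x" using t x by (intro setdist_le_dist) auto
      also have "dist w x = norm y" using w by (simp add: dist_norm)
      also have "\<dots> < \<rho>" using y by simp
      finally show ?thesis by simp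
    qed
  qed
  have part2: "faces_intersect p q p' q'"
    if T: "T \<in> tiling_space P \<sigma>" and f: "is_face T j p q" and f': "is_face T j' p' q'"
      and d: "setdist (\<Inter>(supp ` p)) (\<Inter>(supp ` p')) < \<rho>" for T j p q j' p' q'
  proof -
    note fp = face_props[OF f] and fp' = face_props[OF f']
    have ne: "\<Inter>(supp ` p) \<noteq> {}" by (rule face_Inter_ne[OF T f])
    have ne': "\<Inter>(supp ` p') \<noteq> {}" by (rule face_Inter_ne[OF T f'])
    have int: "\<Inter>(supp ` p) \<inter> \<Inter>(supp ` p') \<noteq> {}"
    proof
      assume "\<Inter>(supp ` p) \<inter> \<Inter>(supp ` p') = {}"
      then have "\<rho> \<le> setdist (\<Inter>(supp ` p)) (\<Inter>(supp ` p'))"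
        using key[rule_format, OF T, of p p'] fp fp' ne ne' by blast
      then show False using d by linarith
    qed
    have "p \<subseteq> q'"
    proof
      fix t assume "t \<in> p"
      then have "\<Inter>(supp ` p) \<subseteq> supp t" by blast
      then have "supp t \<inter> \<Inter>(supp ` p') \<noteq> {}" using int by blast
      then show "t \<in> q'" using fp'(4) fp(1) \<open>t \<in> p\<close> by blast
    qed
    moreover have "p' \<subseteq> q"
    proof
      fix t assume "t \<in> p'"
      then have "\<Inter>(supp ` p') \<subseteq> supp t" by blast
      then have "supp t \<inter> \<Inter>(supp ` p) \<noteq> {}" using int by blast
      then show "t \<in> q" using fp(4) fp'(1) \<open>t \<in> p'\<close> by blast
    qed
    moreover have "is_patch (q \<union> q')"
    proof -
      have "partial_tiling T" using T by (rule ts_partial)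
      moreover have "q \<union> q' \<subseteq> T" using fp(6) fp'(6) by (rule Un_least)
      ultimately have "partial_tiling (q \<union> q')" by (rule partial_tiling_subset)
      then show ?thesis using fp(5) fp'(5) unfolding is_patch_def by blast
    qed
    ultimately show ?thesis unfolding faces_intersect_def by blast
  qed
  show ?thesis
    apply (rule exI[of _ \<rho>])
    apply (intro conjI ballI allI impI \<rho>0)
     apply (erule (1) part1)
    apply (elim conjE)
    apply (erule (3) part2)
    done
qed

end
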